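(* Let $n\ge 3$, and let $\Omega_n$, the perimeter $p:\Omega_n\to\mathbb{R}$, the area $\mathcal A:\Omega_n\to\mathbb{R}$ and $\Psi=(p,\mathcal A):\Omega_n\to\mathbb{R}^2$ be as in the context. Then: (1) $p$ and $\mathcal A$ are submersions on $\Omega_n$; hence the level sets of $p$ (resp. of $\mathcal A$) are the leaves of a codimension $1$ foliation $\mathcal F_p$ (resp. $\mathcal F_a$) on $\Omega_n$. (2) For $\omega\in\Omega_n$, the differential $d\Psi(\omega)$ has rank $2$ if the polygon associated with $\omega$ is not regular, and rank $1$ if it is regular. Consequently $\Psi$ defines a codimension $2$ foliation $\mathcal F$ on the open subset of $\Omega_n$ consisting of the $\omega$ whose associated polygon is not regular, whose leaves are the level sets of $\Psi$ there.
   Context: Let $\mathcal V=\{(x,y,z)\in\mathbb{R}^3: 0<x<y+z,\ 0<y<x+z,\ 0<z<x+y\}$. For $(t,x,s)\in\mathcal V$ let $\alpha(t,x,s)=\arccos\frac{t^2+s^2-x^2}{2ts}\in\,]0,\pi[$ (the angle opposite the side $x$ in a triangle with sides $t,x,s$). Let $$\Omega_n=\Big\{\omega=(t_1,x_1,t_2,x_2,\dots,t_{n-2},x_{n-2},t_{n-1})\in(\mathbb{R}_{>0})^{2n-3}:\ (t_k,x_k,t_{k+1})\in\mathcal V \ (1\le k\le n-2),\ \sum_{k=1}^{n-2}\alpha(t_k,x_k,t_{k+1})<2\pi\Big\}.$$ To $\omega$ associate the planar polygon $(M_1,\dots,M_n)$ with $M_n=O$, $M_k=t_k(\cos\theta_k,\sin\theta_k)$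 ($1\le k\le n-1$), $\theta_1=0$, $\theta_{k+1}=\theta_k+\alpha(t_k,x_k,t_{k+1})$; so $t_k=M_nM_k$, $x_k=M_kM_{k+1}$, the side lengths are $t_1,x_1,\dots,x_{n-2},t_{n-1}$ (the polygon is star-shaped with respect to $M_n$). Perimeter: $p(\omega)=t_1+x_1+x_2+\dots+x_{n-2}+t_{n-1}$. Area: $\mathcal A(\omega)=\sum_{k=1}^{n-2}\frac14\sqrt{f(t_k,x_k,t_{k+1})}$ with $f(x,y,z)=(x+y+z)(-x+y+z)(x-y+z)(x+y-z)$ (Heron's formula for the triangles $M_nM_kM_{k+1}$). A polygon is equilateral if all its sides have the same length, inscribable if all its vertices lie on a common circle, and regular if it is both. *)

theory Defs
  imports "HOL-Analysis.Analysis"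
begin

text \<open>Points of \<Omega>_n live in real^'d, where the coordinates of R^(2n-3) are
  identified with the index type 'd via a bijection idx from {..<2n-3}.
  Coordinate 2k-2 is t_k (k = 1..n-1) and coordinate 2k-1 is x_k (k = 1..n-2).\<close>

definition inV :: "real \<Rightarrow> real \<Rightarrow> real \<Rightarrow> bool" where
  "inV x y z \<longleftrightarrow> 0 < x \<and> x < y + z \<and> 0 < y \<and> y < x + z \<and> 0 < z \<and> z < x + y"

definition alpha :: "real \<Rightarrow> real \<Rightarrow> real \<Rightarrow> real" where
  "alpha t x s = arccos ((t^2 + s^2 - x^2) / (2 * t * s))"

definition heron :: "real \<Rightarrow> real \<Rightarrow> real \<Rightarrow> real" where
  "heron x y z = (x + y + z) * (- x + y + z) * (x - y + z) * (x + y - z)"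

definition tc :: "(nat \<Rightarrow> 'd) \<Rightarrow> real^'d \<Rightarrow> nat \<Rightarrow> real" where
  "tc idx \<omega> k = \<omega> $ idx (2 * k - 2)"

definition xc :: "(nat \<Rightarrow> 'd) \<Rightarrow> real^'d \<Rightarrow> nat \<Rightarrow> real" where
  "xc idx \<omega> k = \<omega> $ idx (2 * k - 1)"

definition Omega :: "nat \<Rightarrow> (nat \<Rightarrow> 'd::finite) \<Rightarrow> (real^'d) set" where
  "Omega n idx = {\<omega>. (\<forall>i. 0 < \<omega> $ i)
      \<and> (\<forall>k\<in>{1..n-2}. inV (tc idx \<omega> k) (xc idx \<omega> k) (tc idx \<omega> (k+1)))
      \<and> (\<Sum>k=1..n-2. alpha (tc idx \<omega> k) (xc idx \<omega> k) (tc idx \<omega> (k+1))) < 2 * pi}"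

definition perim :: "nat \<Rightarrow> (nat \<Rightarrow> 'd::finite) \<Rightarrow> real^'d \<Rightarrow> real" where
  "perim n idx \<omega> = tc idx \<omega> 1 + (\<Sum>k=1..n-2. xc idx \<omega> k) + tc idx \<omega> (n-1)"

definition area :: "nat \<Rightarrow> (nat \<Rightarrow> 'd::finite) \<Rightarrow> real^'d \<Rightarrow> real" where
  "area n idx \<omega> = (\<Sum>k=1..n-2. sqrt (heron (tc idx \<omega> k) (xc idx \<omega> k) (tc idx \<omega> (k+1))) / 4)"

definition Psi :: "nat \<Rightarrow> (nat \<Rightarrow> 'd::finite) \<Rightarrow> real^'d \<Rightarrow> real \<times> real" where
  "Psi n idx \<omega> = (perim n idx \<omega>, area n idx \<omega>)"

definition theta :: "(nat \<Rightarrow> 'd) \<Rightarrow> real^'d \<Rightarrow> nat \<Rightarrow> real" where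
  "theta idx \<omega> k = (\<Sum>j=1..<k. alpha (tc idx \<omega> j) (xc idx \<omega> j) (tc idx \<omega> (j+1)))"

definition vert :: "nat \<Rightarrow> (nat \<Rightarrow> 'd) \<Rightarrow> real^'d \<Rightarrow> nat \<Rightarrow> complex" where
  "vert n idx \<omega> k = (if k = n then 0 else complex_of_real (tc idx \<omega> k) * cis (theta idx \<omega> k))"

definition equilateral :: "nat \<Rightarrow> (nat \<Rightarrow> 'd) \<Rightarrow> real^'d \<Rightarrow> bool" where
  "equilateral n idx \<omega> \<longleftrightarrow> (\<forall>k\<in>{1..n}. \<forall>l\<in>{1..n}.
      dist (vert n idx \<omega> k) (vert n idx \<omega> (k mod n + 1))
    = dist (vert n idx \<omega> l) (vert n idx \<omega> (l mod n + 1)))"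

definition inscribable :: "nat \<Rightarrow> (nat \<Rightarrow> 'd) \<Rightarrow> real^'d \<Rightarrow> bool" where
  "inscribable n idx \<omega> \<longleftrightarrow> (\<exists>c r. \<forall>k\<in>{1..n}. dist (vert n idx \<omega> k) c = r)"

definition regular :: "nat \<Rightarrow> (nat \<Rightarrow> 'd) \<Rightarrow> real^'d \<Rightarrow> bool" where
  "regular n idx \<omega> \<longleftrightarrow> equilateral n idx \<omega> \<and> inscribable n idx \<omega>"

definition submersion_on :: "('a::real_normed_vector \<Rightarrow> 'b::real_normed_vector) \<Rightarrow> 'a set \<Rightarrow> bool" where
  "submersion_on f S \<longleftrightarrow> (\<forall>x\<in>S. \<exists>D. (f has_derivative D) (at x) \<and> surj D)"

end

theory Submission
  imports Defs
begin

definition Cc :: "real \<Rightarrow> real \<Rightarrow> real \<Rightarrow> real" where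
  "Cc t x s = (t^2 + s^2 - x^2) / (2 * t * s)"

lemma heron_alt: "heron t x s = 4*t^2* s^2 - (t^2 + s^2 - x^2)^2"
  unfolding heron_def by (simp add: algebra_simps power2_eq_square)

lemma heron_pos: assumes "inV t x s" shows "heron t x s > 0"
proof -
  have "t + x + s > 0" "-t + x + s > 0" "t - x + s > 0" "t + x - s > 0"
    using assms unfolding inV_def by auto
  thus ?thesis unfolding heron_def by (simp add: mult_pos_pos)
qed

lemma one_minus_Cc: assumes "inV t x s"
  shows "1 - (Cc t x s)^2 = heron t x s / (4*t^2* s^2)"
proof -
  have "t > 0" "s > 0" using assms unfolding inV_def by auto
  thus ?thesis unfolding Cc_def heron_alt by (simp add: field_simps power2_eq_square)
qed

lemma Cc_bounds: assumes "inV t x s" shows "-1 < Cc t x s \<and> Cc t x s < 1"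
proof -
  have "t > 0" "s > 0" using assms unfolding inV_def by auto
  have "1 - (Cc t x s)^2 > 0" using one_minus_Cc[OF assms] heron_pos[OF assms] \<open>t>0\<close> \<open>s>0\<close>
    by simp
  hence "(Cc t x s)^2 < 1" by simp
  thus ?thesis by (simp add: abs_square_less_1 abs_less_iff)
qed

lemma cos_alpha: assumes "inV t x s" shows "cos (alpha t x s) = Cc t x s"
  using Cc_bounds[OF assms] unfolding alpha_def Cc_def by (simp add: cos_arccos)

lemma sin_alpha: assumes "inV t x s" shows "sin (alpha t x s) = sqrt (heron t x s) / (2*t* s)"
proof -
  have "t > 0" "s > 0" using assms unfolding inV_def by auto
  have "sin (alpha t x s) = sqrt (1 - (Cc t x s)^2)"
    using Cc_bounds[OF assms] unfolding alpha_def Cc_def by (simp add: sin_arccos)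
  also have "\<dots> = sqrt (heron t x s / (2*t* s)^2)" using one_minus_Cc[OF assms]
    by (simp add: power2_eq_square mult_ac)
  also have "\<dots> = sqrt (heron t x s) / (2*t* s)" using \<open>t>0\<close> \<open>s>0\<close>
    by (simp add: real_sqrt_divide)
  finally show ?thesis .
qed

lemma alpha_bounds: assumes "inV t x s" shows "0 < alpha t x s \<and> alpha t x s < pi"
  using Cc_bounds[OF assms] unfolding alpha_def Cc_def by (simp add: arccos_lt_bounded)

lemma sin_alpha_pos: assumes "inV t x s" shows "sin (alpha t x s) > 0"
  using alpha_bounds[OF assms] by (simp add: sin_gt_zero)

lemma x_sq: assumes "inV t x s"
  shows "x^2 = t^2 + s^2 - 2*t* s*cos (alpha t x s)"
proof -
  have "t > 0" "s > 0" using assms unfolding inV_def by auto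
  thus ?thesis using cos_alpha[OF assms] unfolding Cc_def by (simp add: field_simps)
qed


lemma angles_equal:
  fixes \<delta> :: "nat \<Rightarrow> real" and M :: nat
  assumes M: "M \<ge> 2" and bnd: "\<And>i. i \<le> M \<Longrightarrow> 0 < \<delta> i \<and> \<delta> i < pi"
    and sum: "(\<Sum>i\<le>M. \<delta> i) = pi"
    and sn: "\<And>i. i \<le> M \<Longrightarrow> sin (\<delta> i) = sin (\<delta> 0)"
  shows "\<And>i. i \<le> M \<Longrightarrow> cos (\<delta> i) = cos (\<delta> 0)"
proof -
  have three: "\<delta> i + \<delta> j + \<delta> l \<le> pi" if "i \<le> M" "j \<le> M" "l \<le> M" "i \<noteq> j" "i \<noteq> l" "j \<noteq> l" for i j l
  proof -
    have "(\<Sum>a\<in>{i,j,l}. \<delta> a) \<le> (\<Sum>a\<le>M. \<delta> a)"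
      by (rule sum_mono2) (use that bnd in \<open>auto intro: less_imp_le\<close>)
    thus ?thesis using that sum by simp
  qed
  have small: "\<delta> i < pi/2" if "i \<le> M" for i
  proof (rule ccontr)
    assume "\<not> \<delta> i < pi/2"
    hence big: "\<delta> i \<ge> pi/2" by simp
    obtain j l where jl: "j \<le> M" "l \<le> M" "i \<noteq> j" "i \<noteq> l" "j \<noteq> l"
    proof (cases "i = 0")
      case True thus ?thesis using that[of 1 2] M by auto
    next
      case False
      show ?thesis
      proof (cases "i = 1")
        case True thus ?thesis using that[of 0 2] M by auto
      next
        case False thus ?thesis using that[of 0 1] M \<open>i \<noteq> 0\<close> by auto
      qed
    qed
    have sij: "sin (\<delta> j) = sin (\<delta> i)" using sn jl \<open>i \<le> M\<close> by metis
    have "\<delta> i + \<delta> j \<ge> pi"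
    proof (cases "\<delta> j \<ge> pi/2")
      case True thus ?thesis using big by simp
    next
      case False
      have "sin (pi - \<delta> i) = sin (\<delta> j)" using sij by simp
      hence "arcsin (sin (pi - \<delta> i)) = arcsin (sin (\<delta> j))" by simp
      moreover have "arcsin (sin (pi - \<delta> i)) = pi - \<delta> i"
        using big bnd[OF \<open>i \<le> M\<close>] by (intro arcsin_sin) auto
      moreover have "arcsin (sin (\<delta> j)) = \<delta> j"
        using False bnd[OF \<open>j \<le> M\<close>] by (intro arcsin_sin) auto
      ultimately show ?thesis by simp
    qed
    moreover have "\<delta> l > 0" using bnd jl by auto
    ultimately show False using three[OF \<open>i \<le> M\<close> jl(1,2) jl(3,4,5)] by simp
  qed
  fix i assume "i \<le> M"
  have "arcsin (sin (\<delta> i)) = arcsin (sin (\<delta> 0))" using sn[OF \<open>i \<le> M\<close>] by simp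
  moreover have "arcsin (sin (\<delta> i)) = \<delta> i"
    using small[OF \<open>i \<le> M\<close>] bnd[OF \<open>i \<le> M\<close>] by (intro arcsin_sin) auto
  moreover have "arcsin (sin (\<delta> 0)) = \<delta> 0"
    using small[of 0] bnd[of 0] by (intro arcsin_sin) auto
  ultimately show "cos (\<delta> i) = cos (\<delta> 0)" by simp
qed


definition al :: "(nat \<Rightarrow> real) \<Rightarrow> (nat \<Rightarrow> real) \<Rightarrow> nat \<Rightarrow> real" where
  "al T X k = alpha (T k) (X k) (T (k+1))"
definition th :: "(nat \<Rightarrow> real) \<Rightarrow> (nat \<Rightarrow> real) \<Rightarrow> nat \<Rightarrow> real" where
  "th T X k = (\<Sum>j=1..<k. al T X j)"
definition onC :: "real \<Rightarrow> real \<Rightarrow> (nat \<Rightarrow> real) \<Rightarrow> (nat \<Rightarrow> real) \<Rightarrow> nat \<Rightarrow> bool" where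
  "onC p q T X k \<longleftrightarrow> T k = 2 * (p * cos (th T X k) + q * sin (th T X k))"

definition da :: "real \<Rightarrow> real \<Rightarrow> real \<Rightarrow> real" where
  "da t x s = t * (x^2 + s^2 - t^2) / (2 * sqrt (heron t x s))"
definition db :: "real \<Rightarrow> real \<Rightarrow> real \<Rightarrow> real" where
  "db t x s = x * (t^2 + s^2 - x^2) / (2 * sqrt (heron t x s))"
definition dc :: "real \<Rightarrow> real \<Rightarrow> real \<Rightarrow> real" where
  "dc t x s = s * (t^2 + x^2 - s^2) / (2 * sqrt (heron t x s))"

lemma th_1[simp]: "th T X 1 = 0" unfolding th_def by simp
lemma th_Suc0[simp]: "th T X (Suc 0) = 0" unfolding th_def by simp
lemma th_Suc: "k \<ge> 1 \<Longrightarrow> th T X (Suc k) = th T X k + al T X k"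
  unfolding th_def by (simp add: sum.atLeastLessThan_Suc)

lemma da_polar: assumes "inV t x s"
  shows "da t x s = (s - t * cos (alpha t x s)) / (2 * sin (alpha t x s))"
proof -
  have "t > 0" "s > 0" using assms unfolding inV_def by auto
  have "sqrt (heron t x s) > 0" using heron_pos[OF assms] by simp
  thus ?thesis unfolding da_def cos_alpha[OF assms] sin_alpha[OF assms] Cc_def
    using \<open>t>0\<close> \<open>s>0\<close> by (simp add: field_simps power2_eq_square)
qed

lemma db_polar: assumes "inV t x s"
  shows "db t x s = x * cos (alpha t x s) / (2 * sin (alpha t x s))"
proof -
  have "t > 0" "s > 0" using assms unfolding inV_def by auto
  have "sqrt (heron t x s) > 0" using heron_pos[OF assms] by simp
  thus ?thesis unfolding db_def cos_alpha[OF assms] sin_alpha[OF assms] Cc_def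
    using \<open>t>0\<close> \<open>s>0\<close> by (simp add: field_simps power2_eq_square)
qed

lemma dc_polar: assumes "inV t x s"
  shows "dc t x s = (t - s * cos (alpha t x s)) / (2 * sin (alpha t x s))"
proof -
  have "t > 0" "s > 0" using assms unfolding inV_def by auto
  have "sqrt (heron t x s) > 0" using heron_pos[OF assms] by simp
  thus ?thesis unfolding dc_def cos_alpha[OF assms] sin_alpha[OF assms] Cc_def
    using \<open>t>0\<close> \<open>s>0\<close> by (simp add: field_simps power2_eq_square)
qed

context
  fixes T X :: "nat \<Rightarrow> real" and k :: nat
  assumes k: "k \<ge> 1" and V: "inV (T k) (X k) (T (k+1))"
begin

lemma lemA: assumes "onC p q T X k" "onC p q T X (k+1)"
  shows "da (T k) (X k) (T (k+1)) = - p * sin (th T X k) + q * cos (th T X k)"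
proof -
  let ?a = "al T X k" let ?t = "th T X k"
  have sa: "sin ?a > 0" using sin_alpha_pos[OF V] unfolding al_def .
  have th1: "th T X (k+1) = ?t + ?a" using th_Suc[OF k] by simp
  have "da (T k) (X k) (T (k+1)) = (T (k+1) - T k * cos ?a) / (2 * sin ?a)"
    using da_polar[OF V] unfolding al_def by simp
  also have "T (k+1) - T k * cos ?a = 2 * sin ?a * (- p * sin ?t + q * cos ?t)"
    using assms unfolding onC_def th1 by (simp add: cos_add sin_add algebra_simps)
  finally show ?thesis using sa by simp
qed

lemma lemB: assumes "onC p q T X k" "onC p q T X (k+1)"
  shows "dc (T k) (X k) (T (k+1)) = p * sin (th T X (k+1)) - q * cos (th T X (k+1))"
proof -
  let ?a = "al T X k" let ?t = "th T X (k+1)"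
  have sa: "sin ?a > 0" using sin_alpha_pos[OF V] unfolding al_def .
  have th1: "th T X k = ?t - ?a" using th_Suc[OF k] by simp
  have "dc (T k) (X k) (T (k+1)) = (T k - T (k+1) * cos ?a) / (2 * sin ?a)"
    using dc_polar[OF V] unfolding al_def by simp
  also have "T k - T (k+1) * cos ?a = 2 * sin ?a * (p * sin ?t - q * cos ?t)"
  proof -
    have "T k - T (k+1) * cos ?a = 2 * (p * (cos ?t * cos ?a + sin ?t * sin ?a) + q * (sin ?t * cos ?a - cos ?t * sin ?a))
       - 2 * (p * cos ?t + q * sin ?t) * cos ?a"
      using assms unfolding onC_def th1 by (simp add: cos_diff sin_diff)
    also have "\<dots> = 2 * sin ?a * (p * sin ?t - q * cos ?t)" by (simp add: algebra_simps)
    finally show ?thesis .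
  qed
  finally show ?thesis using sa by simp
qed

lemma onC_next: assumes "onC p q T X k" "da (T k) (X k) (T (k+1)) = - p * sin (th T X k) + q * cos (th T X k)"
  shows "onC p q T X (k+1)"
proof -
  let ?a = "al T X k" let ?t = "th T X k"
  have sa: "sin ?a > 0" using sin_alpha_pos[OF V] unfolding al_def .
  have th1: "th T X (k+1) = ?t + ?a" using th_Suc[OF k] by simp
  have "(T (k+1) - T k * cos ?a) / (2 * sin ?a) = - p * sin ?t + q * cos ?t"
    using assms(2) da_polar[OF V] unfolding al_def by simp
  hence "T (k+1) = T k * cos ?a + 2 * sin ?a * (- p * sin ?t + q * cos ?t)"
    using sa by (simp add: field_simps)
  thus ?thesis using assms(1) unfolding onC_def th1
    by (simp add: cos_add sin_add algebra_simps)
qed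

lemma chord: assumes "onC p q T X k" "onC p q T X (k+1)"
  shows "(X k)^2 = 4 * (sin (al T X k))^2 * (p^2 + q^2)"
proof -
  let ?a = "al T X k" let ?t = "th T X k"
  have th1: "th T X (k+1) = ?t + ?a" using th_Suc[OF k] by simp
  have x2: "(X k)^2 = (T k)^2 + (T (k+1))^2 - 2 * T k * T (k+1) * cos ?a"
    using x_sq[OF V] unfolding al_def .
  have e1: "(sin ?t)^2 + (cos ?t)^2 = 1" by simp
  have e2: "(sin ?a)^2 + (cos ?a)^2 = 1" by simp
  show ?thesis unfolding x2 using assms e1 e2 unfolding onC_def th1 cos_add sin_add
    by algebra
qed

lemma db_chord: assumes "onC p q T X k" "onC p q T X (k+1)" "X k > 0"
  shows "db (T k) (X k) (T (k+1)) = sqrt (p^2 + q^2) * cos (al T X k)"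
    and "X k = 2 * sqrt (p^2 + q^2) * sin (al T X k)"
proof -
  have sa: "sin (al T X k) > 0" using sin_alpha_pos[OF V] unfolding al_def .
  have "(X k)^2 = (2 * sqrt (p^2 + q^2) * sin (al T X k))^2"
    using chord[OF assms(1,2)] by (simp add: power_mult_distrib)
  moreover have "2 * sqrt (p^2 + q^2) * sin (al T X k) \<ge> 0" using sa by simp
  ultimately show xe: "X k = 2 * sqrt (p^2 + q^2) * sin (al T X k)"
    using assms(3) by (metis less_imp_le power2_eq_iff_nonneg)
  show "db (T k) (X k) (T (k+1)) = sqrt (p^2 + q^2) * cos (al T X k)"
  proof -
    have "db (T k) (X k) (T (k+1)) = X k * cos (al T X k) / (2 * sin (al T X k))"
      using db_polar[OF V] unfolding al_def .
    also have "\<dots> = sqrt (p^2 + q^2) * cos (al T X k)"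
      by (subst xe) (use sa in simp)
    finally show ?thesis .
  qed
qed

end


definition tri :: "(nat \<Rightarrow> real) \<Rightarrow> (nat \<Rightarrow> real) \<Rightarrow> nat \<Rightarrow> bool" where
  "tri T X m \<longleftrightarrow> (\<forall>k\<in>{1..m}. inV (T k) (X k) (T (k+1)))"
definition Lag :: "(nat \<Rightarrow> real) \<Rightarrow> (nat \<Rightarrow> real) \<Rightarrow> nat \<Rightarrow> real \<Rightarrow> bool" where
  "Lag T X m l \<longleftrightarrow> da (T 1) (X 1) (T 2) = l \<and> dc (T m) (X m) (T (m+1)) = l
     \<and> (\<forall>k\<in>{1..m}. db (T k) (X k) (T (k+1)) = l)
     \<and> (\<forall>k\<in>{2..m}. dc (T (k-1)) (X (k-1)) (T k) + da (T k) (X k) (T (k+1)) = 0)"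
definition eqsides :: "(nat \<Rightarrow> real) \<Rightarrow> (nat \<Rightarrow> real) \<Rightarrow> nat \<Rightarrow> bool" where
  "eqsides T X m \<longleftrightarrow> (\<forall>k\<in>{1..m}. X k = T 1) \<and> T (m+1) = T 1"
definition concyc :: "(nat \<Rightarrow> real) \<Rightarrow> (nat \<Rightarrow> real) \<Rightarrow> nat \<Rightarrow> bool" where
  "concyc T X m \<longleftrightarrow> (\<exists>p q. \<forall>k\<in>{1..m+1}. onC p q T X k)"

lemma tri_pos: assumes "tri T X m" "m \<ge> 1" "k \<in> {1..m+1}" shows "T k > 0"
proof (cases "k \<le> m")
  case True thus ?thesis using assms unfolding tri_def inV_def by auto
next
  case False hence "k = m + 1" using assms by auto
  moreover have "inV (T m) (X m) (T (m+1))" using assms unfolding tri_def by auto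
  ultimately show ?thesis unfolding inV_def by auto
qed

lemma tri_posX: assumes "tri T X m" "k \<in> {1..m}" shows "X k > 0"
  using assms unfolding tri_def inV_def by auto

lemma R1:
  assumes tr: "tri T X m" and m: "m \<ge> 1" and L: "Lag T X m l"
  shows "eqsides T X m \<and> concyc T X m"
proof -
  define p where "p = T 1 / 2"
  define q where "q = l"
  have V: "\<And>k. k \<in> {1..m} \<Longrightarrow> inV (T k) (X k) (T (k+1))" using tr unfolding tri_def by auto
  have on: "1 \<le> k \<longrightarrow> k \<le> m \<longrightarrow> onC p q T X k \<and> onC p q T X (k+1)" for k
  proof (induction k)
    case 0 thus ?case by simp
  next
    case (Suc k)
    show ?case
    proof (cases "k = 0")
      case True
      have o1: "onC p q T X 1" unfolding onC_def p_def by simp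
      have "da (T 1) (X 1) (T (1+1)) = - p * sin (th T X 1) + q * cos (th T X 1)"
        using L unfolding Lag_def q_def by (simp add: numeral_2_eq_2)
      hence "onC p q T X (1+1)" using onC_next[of 1 T X p q] o1 V[of 1] m by simp
      thus ?thesis using o1 True by simp
    next
      case False
      show ?thesis
      proof (intro impI)
        assume "Suc k \<le> m"
        hence ih: "onC p q T X k" "onC p q T X (k+1)" using Suc False by auto
        have k1: "k \<ge> 1" using False by simp
        have "dc (T k) (X k) (T (k+1)) = p * sin (th T X (k+1)) - q * cos (th T X (k+1))"
          using lemB[OF k1 V[of k] ih] k1 \<open>Suc k \<le> m\<close> by simp
        moreover have "dc (T (Suc k - 1)) (X (Suc k - 1)) (T (Suc k)) + da (T (Suc k)) (X (Suc k)) (T (Suc k+1)) = 0"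
        proof -
          have "Suc k \<in> {2..m}" using \<open>Suc k \<le> m\<close> k1 by simp
          thus ?thesis using L unfolding Lag_def by blast
        qed
        ultimately have "da (T (k+1)) (X (k+1)) (T (k+1+1)) = - p * sin (th T X (k+1)) + q * cos (th T X (k+1))"
          by simp
        hence "onC p q T X (k+1+1)" using onC_next[of "k+1" T X p q] ih V[of "k+1"] \<open>Suc k \<le> m\<close> by simp
        thus "onC p q T X (Suc k) \<and> onC p q T X (Suc k + 1)" using ih by simp
      qed
    qed
  qed
  have onall: "onC p q T X k" if "k \<in> {1..m+1}" for k
  proof (cases "k \<le> m")
    case True thus ?thesis using on[of k] that by auto
  next
    case False hence "k = (k-1) + 1" "k - 1 \<ge> 1" "k - 1 \<le> m" using that m by auto
    thus ?thesis using on[of "k-1"] by metis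
  qed
  let ?r = "p^2 + q^2"
  have sqx: "(X k)^2 = 4 * ?r - 4 * l^2" if "k \<in> {1..m}" for k
  proof -
    have k1: "k \<ge> 1" using that by simp
    have oo: "onC p q T X k" "onC p q T X (k+1)" using onall that by auto
    have "X k > 0" using tri_posX[OF tr that] .
    note dd = db_chord[OF k1 V[OF that] oo this]
    have "l = sqrt ?r * cos (al T X k)" using dd(1) L that unfolding Lag_def by auto
    hence "l^2 = ?r * (cos (al T X k))^2" by (simp add: power_mult_distrib)
    moreover have "(X k)^2 = 4 * ?r * (sin (al T X k))^2" using dd(2) by (simp add: power_mult_distrib)
    moreover have "(sin (al T X k))^2 = 1 - (cos (al T X k))^2" by (simp add: sin_squared_eq)
    ultimately show ?thesis by (simp add: algebra_simps)
  qed
  have sq1: "(T 1)^2 = 4 * ?r - 4 * l^2" unfolding p_def q_def by (simp add: power_divide)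
  have sqm: "(T (m+1))^2 = 4 * ?r - 4 * l^2"
  proof -
    have oo: "onC p q T X m" "onC p q T X (m+1)" using onall m by auto
    have "l = p * sin (th T X (m+1)) - q * cos (th T X (m+1))"
      using lemB[OF m V[of m] oo] L m unfolding Lag_def by auto
    moreover have "T (m+1) = 2 * (p * cos (th T X (m+1)) + q * sin (th T X (m+1)))"
      using oo(2) unfolding onC_def .
    moreover have "(sin (th T X (m+1)))^2 + (cos (th T X (m+1)))^2 = 1" by simp
    ultimately show ?thesis unfolding q_def by algebra
  qed
  have T1p: "T 1 > 0" using tri_pos[OF tr m] m by auto
  have "X k = T 1" if "k \<in> {1..m}" for k
    using sqx[OF that] sq1 tri_posX[OF tr that] T1p by (metis less_imp_le power2_eq_iff_nonneg)
  moreover have "T (m+1) = T 1"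
    using sqm sq1 tri_pos[OF tr, of "m+1"] T1p m by (metis less_imp_le power2_eq_iff_nonneg atLeastAtMost_iff le_add2 order_refl)
  ultimately have "eqsides T X m" unfolding eqsides_def by auto
  moreover have "concyc T X m" unfolding concyc_def using onall by blast
  ultimately show ?thesis by simp
qed


lemma th_shift: "th T X (Suc m) = (\<Sum>i<m. al T X (Suc i))"
  unfolding th_def
  by (metis One_nat_def atLeast0LessThan sum.atLeast_Suc_lessThan_Suc_shift comp_def sum.cong)

lemma R2:
  assumes tr: "tri T X m" and m: "m \<ge> 1" and E: "eqsides T X m" and Cy: "concyc T X m"
  shows "\<exists>l. Lag T X m l"
proof -
  obtain p q where onall: "\<And>k. k \<in> {1..m+1} \<Longrightarrow> onC p q T X k" using Cy unfolding concyc_def by blast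
  have V: "\<And>k. k \<in> {1..m} \<Longrightarrow> inV (T k) (X k) (T (k+1))" using tr unfolding tri_def by auto
  have Tp: "\<And>k. k \<in> {1..m+1} \<Longrightarrow> T k > 0" using tri_pos[OF tr m] by blast
  have p2: "T 1 = 2 * p" using onall[of 1] unfolding onC_def by simp
  hence pp: "p > 0" using Tp[of 1] by simp
  define r where "r = sqrt (p^2 + q^2)"
  have rp: "r > 0" unfolding r_def using pp by (intro real_sqrt_gt_zero add_pos_nonneg) auto
  define phi where "phi = arctan (q / p)"
  have s1: "sqrt (1 + (q/p)^2) = r / p"
  proof -
    have "1 + (q/p)^2 = (p^2 + q^2) / p^2" using pp by (simp add: field_simps power2_eq_square)
    thus ?thesis unfolding r_def using pp by (simp add: real_sqrt_divide)
  qed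
  have pc: "p = r * cos phi" unfolding phi_def cos_arctan s1 using pp rp by simp
  have qs: "q = r * sin phi" unfolding phi_def sin_arctan s1 using pp rp by simp
  have phib: "- (pi/2) < phi \<and> phi < pi/2" unfolding phi_def by (rule arctan_bounded)
  define psi where "psi k = th T X k - phi" for k
  have Tpsi: "T k = 2 * r * cos (psi k)" if "k \<in> {1..m+1}" for k
    using onall[OF that] unfolding onC_def psi_def pc qs cos_diff by (simp add: algebra_simps)
  have psib: "1 \<le> k \<longrightarrow> k \<le> m+1 \<longrightarrow> - (pi/2) < psi k \<and> psi k < pi/2" for k
  proof (induction k)
    case 0 thus ?case by simp
  next
    case (Suc k)
    show ?case
    proof (cases "k = 0")
      case True thus ?thesis using phib unfolding psi_def by simp
    next
      case False
      show ?thesis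
      proof (intro impI)
        assume a: "Suc k \<le> m + 1"
        hence ih: "- (pi/2) < psi k \<and> psi k < pi/2" using Suc False by simp
        have k1: "k \<ge> 1" using False by simp
        have ps: "psi (Suc k) = psi k + al T X k" unfolding psi_def using th_Suc[OF k1] by simp
        have ab: "0 < al T X k \<and> al T X k < pi" using alpha_bounds[OF V[of k]] a k1 unfolding al_def by simp
        have "cos (psi (Suc k)) > 0" using Tpsi[of "Suc k"] Tp[of "Suc k"] a rp
          by (simp add: zero_less_mult_iff)
        moreover have "cos (psi (Suc k)) \<le> 0" if "psi (Suc k) \<ge> pi/2"
        proof -
          have "cos (psi (Suc k)) = - sin (psi (Suc k) - pi/2)" by (simp add: sin_diff)
          moreover have "sin (psi (Suc k) - pi/2) \<ge> 0" using that ps ih ab by (intro sin_ge_zero) auto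
          ultimately show ?thesis by simp
        qed
        ultimately show "- (pi/2) < psi (Suc k) \<and> psi (Suc k) < pi/2" using ps ih ab by force
      qed
    qed
  qed
  define dl where "dl i = (if i = 0 then pi/2 - phi else if i \<le> m then al T X i else pi/2 - psi (m+1))" for i
  have dlb: "0 < dl i \<and> dl i < pi" if hi: "i \<le> m+1" for i
  proof -
    consider "i = 0" | "1 \<le> i \<and> i \<le> m" | "i = m + 1" using hi by linarith
    thus ?thesis
    proof cases
      case 1 thus ?thesis using phib unfolding dl_def by simp
    next
      case 2 thus ?thesis using alpha_bounds[OF V[of i]] unfolding dl_def al_def by simp
    next
      case 3 thus ?thesis using psib[of "m+1"] m unfolding dl_def by simp
    qed
  qed
  have dlsum: "(\<Sum>i\<le>m+1. dl i) = pi"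
  proof -
    have "(\<Sum>i\<le>m+1. dl i) = (\<Sum>i\<le>m. dl i) + dl (m+1)" by simp
    also have "(\<Sum>i\<le>m. dl i) = dl 0 + (\<Sum>i<m. dl (Suc i))" by (rule sum.atMost_shift)
    also have "(\<Sum>i<m. dl (Suc i)) = (\<Sum>i<m. al T X (Suc i))"
      by (rule sum.cong) (auto simp: dl_def)
    also have "\<dots> = th T X (Suc m)" by (rule th_shift[symmetric])
    finally show ?thesis unfolding dl_def psi_def by simp
  qed
  have dlsin: "2 * r * sin (dl i) = T 1" if hi: "i \<le> m+1" for i
  proof -
    consider "i = 0" | "1 \<le> i \<and> i \<le> m" | "i = m + 1" using hi by linarith
    thus ?thesis
    proof cases
      case 1 thus ?thesis unfolding dl_def using p2 pc by (simp add: sin_diff)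
    next
      case 2
      hence i1: "i \<ge> 1" and im: "i \<in> {1..m}" by auto
      have "X i = 2 * r * sin (al T X i)"
        using db_chord(2)[OF i1 V[OF im] onall onall tri_posX[OF tr im]] im unfolding r_def by auto
      thus ?thesis using E im 2 unfolding eqsides_def dl_def by auto
    next
      case 3 thus ?thesis unfolding dl_def using Tpsi[of "m+1"] E m unfolding eqsides_def by (simp add: sin_diff)
    qed
  qed
  have dlcos: "cos (dl i) = cos (dl 0)" if "i \<le> m+1" for i
  proof (rule angles_equal[of "m+1" dl])
    show "2 \<le> m + 1" using m by simp
    show "\<And>i. i \<le> m + 1 \<Longrightarrow> 0 < dl i \<and> dl i < pi" using dlb by blast
    show "(\<Sum>i\<le>m + 1. dl i) = pi" by (rule dlsum)
    show "\<And>i. i \<le> m + 1 \<Longrightarrow> sin (dl i) = sin (dl 0)"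
      using dlsin rp by (metis le0 mult_cancel_left mult_eq_0_iff zero_neq_numeral less_irrefl)
    show "i \<le> m + 1" by (rule that)
  qed
  have cd0: "r * cos (dl 0) = q" unfolding dl_def using qs by (simp add: cos_diff)
  have L1: "da (T 1) (X 1) (T 2) = q"
    using lemA[of 1 T X p q] V[of 1] onall[of 1] onall[of 2] m by (simp add: numeral_2_eq_2)
  have L2: "dc (T m) (X m) (T (m+1)) = q"
  proof -
    have "dc (T m) (X m) (T (m+1)) = p * sin (th T X (m+1)) - q * cos (th T X (m+1))"
      using lemB[OF m V[of m] onall onall] m by simp
    also have "\<dots> = r * sin (psi (m+1))" unfolding pc qs psi_def sin_diff by (simp add: algebra_simps)
    also have "\<dots> = r * cos (dl (m+1))" unfolding dl_def by (simp add: cos_diff)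
    also have "\<dots> = q" using dlcos[of "m+1"] cd0 by simp
    finally show ?thesis .
  qed
  have L3: "db (T k) (X k) (T (k+1)) = q" if im: "k \<in> {1..m}" for k
  proof -
    have i1: "k \<ge> 1" using im by simp
    have "db (T k) (X k) (T (k+1)) = r * cos (al T X k)"
      using db_chord(1)[OF i1 V[OF im] onall onall tri_posX[OF tr im]] im unfolding r_def by auto
    also have "\<dots> = r * cos (dl k)" using im unfolding dl_def by simp
    also have "\<dots> = q" using dlcos[of k] cd0 im by simp
    finally show ?thesis .
  qed
  have L4: "dc (T (k-1)) (X (k-1)) (T k) + da (T k) (X k) (T (k+1)) = 0" if im: "k \<in> {2..m}" for k
  proof -
    have k1: "k - 1 \<ge> 1" "k - 1 + 1 = k" "k - 1 \<in> {1..m}" "k \<in> {1..m}" using im by auto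
    have "dc (T (k-1)) (X (k-1)) (T k) = p * sin (th T X k) - q * cos (th T X k)"
      using lemB[OF k1(1) V[OF k1(3)] onall onall] k1 im by auto
    moreover have "da (T k) (X k) (T (k+1)) = - p * sin (th T X k) + q * cos (th T X k)"
      using lemA[of k T X p q] V[OF k1(4)] onall[of k] onall[of "k+1"] im by auto
    ultimately show ?thesis by simp
  qed
  show ?thesis unfolding Lag_def using L1 L2 L3 L4 by blast
qed


lemma cmod_diff_sq:
  "(cmod (complex_of_real t * cis a - complex_of_real s * cis b))^2 = t^2 + s^2 - 2 * t * s * cos (b - a)"
proof -
  have "(cmod (complex_of_real t * cis a - complex_of_real s * cis b))^2
      = (t * cos a - s * cos b)^2 + (t * sin a - s * sin b)^2"
    by (simp add: cmod_power2)
  also have "\<dots> = t^2 + s^2 - 2 * t * s * cos (b - a)"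
    using sin_cos_squared_add[of a] sin_cos_squared_add[of b] unfolding cos_diff by algebra
  finally show ?thesis .
qed

lemma theta_th: "theta idx \<omega> = th (tc idx \<omega>) (xc idx \<omega>)"
  unfolding theta_def th_def al_def by (rule ext) simp

context
  fixes n :: nat and idx :: "nat \<Rightarrow> 'd::finite" and \<omega> :: "real^'d"
  assumes n: "n \<ge> 3" and om: "\<omega> \<in> Omega n idx"
begin

abbreviation "TT \<equiv> tc idx \<omega>"
abbreviation "XX \<equiv> xc idx \<omega>"

lemma tri_om: "tri TT XX (n-2)"
  using om unfolding Omega_def tri_def by auto

lemma m1: "n - 2 \<ge> 1" using n by simp

lemma vert_k: "k \<in> {1..n-1} \<Longrightarrow> vert n idx \<omega> k = complex_of_real (TT k) * cis (th TT XX k)"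
  unfolding vert_def theta_th using n by auto

definition side where "side k = dist (vert n idx \<omega> k) (vert n idx \<omega> (k mod n + 1))"

lemma side_n: "side n = TT 1"
proof -
  have "TT 1 > 0" using tri_pos[OF tri_om m1, of 1] by simp
  moreover have "vert n idx \<omega> 1 = complex_of_real (TT 1)" using vert_k[of 1] n by simp
  ultimately show ?thesis unfolding side_def vert_def using n by (simp add: dist_norm)
qed

lemma side_last: "side (n-1) = TT (n-1)"
proof -
  have "n - 1 \<in> {1..n-2+1}" using n by auto
  hence "TT (n-1) > 0" using tri_pos[OF tri_om m1, of "n-1"] by simp
  moreover have "(n - 1) mod n + 1 = n" using n by simp
  ultimately show ?thesis unfolding side_def using vert_k[of "n-1"] n
    by (simp add: dist_norm vert_def norm_mult)
qed

lemma side_mid: assumes "k \<in> {1..n-2}" shows "side k = XX k"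
proof -
  have V: "inV (TT k) (XX k) (TT (k+1))" using tri_om assms unfolding tri_def by auto
  have k1: "k \<ge> 1" using assms by simp
  have "k < n" using assms n by auto
  hence "k mod n + 1 = k + 1" by simp
  hence "side k = cmod (complex_of_real (TT k) * cis (th TT XX k) - complex_of_real (TT (k+1)) * cis (th TT XX (k+1)))"
  proof -
    have "k \<in> {1..n-1}" "k+1 \<in> {1..n-1}" using assms n by auto
    thus ?thesis unfolding side_def \<open>k mod n + 1 = k + 1\<close> using vert_k[of k] vert_k[of "k+1"] by (simp add: dist_norm)
  qed
  also have "\<dots> = XX k"
  proof -
    have "(cmod (complex_of_real (TT k) * cis (th TT XX k) - complex_of_real (TT (k+1)) * cis (th TT XX (k+1))))^2 = (XX k)^2"
      unfolding cmod_diff_sq using th_Suc[OF k1, of TT XX] x_sq[OF V] by (simp add: al_def)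
    moreover have "XX k > 0" using V unfolding inV_def by simp
    ultimately show ?thesis by (simp add: power2_eq_iff_nonneg)
  qed
  finally show ?thesis .
qed

lemma equilateral_iff: "equilateral n idx \<omega> \<longleftrightarrow> eqsides TT XX (n-2)"
proof -
  have eq: "equilateral n idx \<omega> \<longleftrightarrow> (\<forall>k\<in>{1..n}. side k = side n)"
    unfolding equilateral_def side_def[symmetric] using n by (metis atLeastAtMost_iff le_refl le_trans less_imp_le)
  show ?thesis unfolding eq eqsides_def
  proof (intro iffI conjI ballI)
    assume H: "\<forall>k\<in>{1..n}. side k = side n"
    fix k assume "k \<in> {1..n-2}"
    thus "XX k = TT 1" using H side_mid[of k] side_n by auto
  next
    assume H: "\<forall>k\<in>{1..n}. side k = side n"
    show "TT (n - 2 + 1) = TT 1" using H[rule_format, of "n-1"] side_last side_n n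
      by (simp add: Suc_diff_Suc numeral_2_eq_2)
  next
    assume H: "(\<forall>k\<in>{1..n - 2}. XX k = TT 1) \<and> TT (n - 2 + 1) = TT 1"
    fix k assume k: "k \<in> {1..n}"
    consider "k \<in> {1..n-2}" | "k = n - 1" | "k = n" using k by fastforce
    thus "side k = side n"
    proof cases
      case 1 thus ?thesis using side_mid side_n H by auto
    next
      case 2
      have "n - 2 + 1 = n - 1" using n by simp
      thus ?thesis using 2 side_last side_n H by simp
    qed simp
  qed
qed

lemma inscribable_iff: "inscribable n idx \<omega> \<longleftrightarrow> concyc TT XX (n-2)"
proof
  assume "inscribable n idx \<omega>"
  then obtain c r where cr: "\<And>k. k \<in> {1..n} \<Longrightarrow> dist (vert n idx \<omega> k) c = r"
    unfolding inscribable_def by blast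
  have r: "r = cmod c" using cr[of n] n unfolding vert_def by (simp add: dist_norm)
  have "onC (Re c) (Im c) TT XX k" if k: "k \<in> {1..n-2+1}" for k
  proof -
    have k': "k \<in> {1..n-1}" "k \<in> {1..n}" using k n by auto
    have Tp: "TT k > 0" using tri_pos[OF tri_om m1 k] .
    let ?t = "th TT XX k"
    have "(cmod (complex_of_real (TT k) * cis ?t - c))^2 = (cmod c)^2"
      using cr[OF k'(2)] r vert_k[OF k'(1)] by (simp add: dist_norm)
    hence "(TT k * cos ?t - Re c)^2 + (TT k * sin ?t - Im c)^2 = (Re c)^2 + (Im c)^2"
      by (simp add: cmod_power2)
    hence "TT k * TT k = TT k * (2 * (Re c * cos ?t + Im c * sin ?t))"
      using sin_cos_squared_add[of ?t] by algebra
    hence "TT k = 2 * (Re c * cos ?t + Im c * sin ?t)" using Tp by simp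
    thus ?thesis unfolding onC_def .
  qed
  thus "concyc TT XX (n-2)" unfolding concyc_def by blast
next
  assume "concyc TT XX (n-2)"
  then obtain p q where pq: "\<And>k. k \<in> {1..n-2+1} \<Longrightarrow> onC p q TT XX k" unfolding concyc_def by blast
  define c where "c = Complex p q"
  have "dist (vert n idx \<omega> k) c = cmod c" if k: "k \<in> {1..n}" for k
  proof (cases "k = n")
    case True thus ?thesis unfolding vert_def by (simp add: dist_norm)
  next
    case False
    hence k': "k \<in> {1..n-1}" "k \<in> {1..n-2+1}" using k n by auto
    let ?t = "th TT XX k"
    have e: "TT k = 2 * (p * cos ?t + q * sin ?t)" using pq[OF k'(2)] unfolding onC_def .
    have "(cmod (complex_of_real (TT k) * cis ?t - c))^2 = (TT k * cos ?t - p)^2 + (TT k * sin ?t - q)^2"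
      unfolding c_def by (simp add: cmod_power2)
    also have "\<dots> = p^2 + q^2"
      using e sin_cos_squared_add[of ?t] by algebra
    also have "\<dots> = (cmod c)^2" unfolding c_def by (simp add: cmod_power2)
    finally have "cmod (complex_of_real (TT k) * cis ?t - c) = cmod c"
      by (simp add: power2_eq_iff_nonneg)
    thus ?thesis using vert_k[OF k'(1)] by (simp add: dist_norm)
  qed
  thus "inscribable n idx \<omega>" unfolding inscribable_def by blast
qed

lemma regular_iff_Lag: "regular n idx \<omega> \<longleftrightarrow> (\<exists>l. Lag TT XX (n-2) l)"
  unfolding regular_def equilateral_iff inscribable_iff
  using R1[OF tri_om m1] R2[OF tri_om m1] by blast

end


lemma heron_deriv:
  fixes f1 f2 f3 :: "'a::real_normed_vector \<Rightarrow> real"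
  assumes "bounded_linear f1" "bounded_linear f2" "bounded_linear f3"
  shows "((\<lambda>w. heron (f1 w) (f2 w) (f3 w)) has_derivative
     (\<lambda>h. 4 * f1 w * ((f2 w)^2 + (f3 w)^2 - (f1 w)^2) * f1 h + 4 * f2 w * ((f1 w)^2 + (f3 w)^2 - (f2 w)^2) * f2 h
        + 4 * f3 w * ((f1 w)^2 + (f2 w)^2 - (f3 w)^2) * f3 h)) (at w)"
proof -
  have d1: "(f1 has_derivative f1) (at w)" "(f2 has_derivative f2) (at w)" "(f3 has_derivative f3) (at w)"
    using assms by (auto intro: bounded_linear_imp_has_derivative)
  show ?thesis unfolding heron_def
    apply (rule has_derivative_eq_rhs)
     apply (rule derivative_intros d1)+
    apply (rule ext)
    apply (simp add: algebra_simps power2_eq_square)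
    done
qed

lemma tri_deriv:
  fixes f1 f2 f3 :: "'a::real_normed_vector \<Rightarrow> real"
  assumes "bounded_linear f1" "bounded_linear f2" "bounded_linear f3" "heron (f1 w) (f2 w) (f3 w) > 0"
  shows "((\<lambda>v. sqrt (heron (f1 v) (f2 v) (f3 v)) / 4) has_derivative
     (\<lambda>h. da (f1 w) (f2 w) (f3 w) * f1 h + db (f1 w) (f2 w) (f3 w) * f2 h + dc (f1 w) (f2 w) (f3 w) * f3 h)) (at w)"
proof -
  note H = heron_deriv[OF assms(1-3), of w]
  note S = DERIV_compose_FDERIV[OF DERIV_real_sqrt[OF assms(4)] H]
  show ?thesis
    apply (rule has_derivative_eq_rhs[OF has_derivative_divide[OF S has_derivative_const]])
     apply simp
    apply (rule ext)
    using assms(4) unfolding da_def db_def dc_def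
    apply (simp add: field_simps)
    done
qed


lemma rank2:
  fixes P A :: "'a::real_vector \<Rightarrow> real"
  assumes P: "linear P" and A: "linear A" and e: "P e = 1"
  shows "dim (range (\<lambda>h. (P h, A h))) = (if \<exists>l. \<forall>h. A h = l * P h then 1 else 2)"
proof (cases "\<exists>l. \<forall>h. A h = l * P h")
  case True
  then obtain l where l: "\<And>h. A h = l * P h" by blast
  have "range (\<lambda>h. (P h, A h)) = range (\<lambda>c. c *\<^sub>R (1::real, l))"
  proof (intro set_eqI iffI)
    fix v assume "v \<in> range (\<lambda>h. (P h, A h))"
    then obtain h where "v = (P h, A h)" by blast
    hence "v = P h *\<^sub>R (1, l)" using l by simp
    thus "v \<in> range (\<lambda>c. c *\<^sub>R (1::real, l))" by blast
  next
    fix v assume "v \<in> range (\<lambda>c. c *\<^sub>R (1::real, l))"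
    then obtain c where c: "v = c *\<^sub>R (1, l)" by blast
    have "P (c *\<^sub>R e) = c" "A (c *\<^sub>R e) = c * l"
      using linear_scale[OF P] linear_scale[OF A] e l[of e] by auto
    hence "v = (P (c *\<^sub>R e), A (c *\<^sub>R e))" using c by simp
    thus "v \<in> range (\<lambda>h. (P h, A h))" by blast
  qed
  also have "\<dots> = span {(1::real, l)}" by (simp add: span_singleton)
  finally have "dim (range (\<lambda>h. (P h, A h))) = dim {(1::real, l)}" by (simp add: dim_span)
  also have "\<dots> = 1" by (simp add: dim_insert zero_prod_def)
  finally show ?thesis using True by simp
next
  case False
  define l where "l = A e"
  obtain h where h: "A h \<noteq> l * P h" using False by blast
  have "range (\<lambda>h. (P h, A h)) = UNIV"
  proof (intro set_eqI iffI)
    fix v :: "real \<times> real"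
    obtain a b where v: "v = (a, b)" by fastforce
    define be where "be = (b - l * a) / (A h - l * P h)"
    define alp where "alp = a - be * P h"
    have d: "A h - l * P h \<noteq> 0" using h by simp
    have "P (alp *\<^sub>R e + be *\<^sub>R h) = a"
      using linear_add[OF P] linear_scale[OF P] e unfolding alp_def by simp
    moreover have "A (alp *\<^sub>R e + be *\<^sub>R h) = b"
    proof -
      have "A (alp *\<^sub>R e + be *\<^sub>R h) = alp * l + be * A h"
        using linear_add[OF A] linear_scale[OF A] unfolding l_def by simp
      also have "\<dots> = a * l + be * (A h - l * P h)" unfolding alp_def by (simp add: algebra_simps)
      also have "\<dots> = b" unfolding be_def using d by simp
      finally show ?thesis .
    qed
    ultimately have "v = (\<lambda>h. (P h, A h)) (alp *\<^sub>R e + be *\<^sub>R h)" unfolding v by simp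
    thus "v \<in> range (\<lambda>h. (P h, A h))" by (rule image_eqI) simp
  qed simp
  thus ?thesis using False by simp
qed


definition ind :: "bool \<Rightarrow> real" where "ind b = (if b then 1 else 0)"

definition Ssum :: "nat \<Rightarrow> (nat \<Rightarrow> real) \<Rightarrow> (nat \<Rightarrow> real) \<Rightarrow> (nat \<Rightarrow> real) \<Rightarrow> nat \<Rightarrow> real" where
  "Ssum m a b c j = (\<Sum>k\<in>{1..m}. a k * ind (2*k-2 = j) + b k * ind (2*k-1 = j) + c k * ind (2*k = j))"

lemma sel_sum: "(\<Sum>k\<in>{1..(m::nat)}. f k * ind (g k = (j::nat))) = (\<Sum>k\<in>{1..m} \<inter> {k. g k = j}. f k)"
proof -
  have "(\<Sum>k\<in>{1..m}. f k * ind (g k = j)) = (\<Sum>k\<in>{1..m}. if g k \<in> {j} then f k else 0)"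
    by (rule sum.cong) (auto simp: ind_def)
  also have "\<dots> = sum f ({1..m} \<inter> {k. g k = j})"
    by (subst sum.inter_restrict) auto
  finally show ?thesis .
qed

lemma Ssum_split: "Ssum m a b c j = (\<Sum>k\<in>{1..m} \<inter> {k. 2*k-2 = j}. a k) + (\<Sum>k\<in>{1..m} \<inter> {k. 2*k-1 = j}. b k)
   + (\<Sum>k\<in>{1..m} \<inter> {k. 2*k = j}. c k)"
  unfolding Ssum_def sum.distrib sel_sum ..

lemma Ssum_odd: assumes "k0 \<in> {1..m}" shows "Ssum m a b c (2*k0-1) = b k0"
proof -
  have "{1..m} \<inter> {k. 2*k-2 = 2*k0-1} = {}" using assms by (auto; presburger)
  moreover have "{1..m} \<inter> {k. 2*k-1 = 2*k0-1} = {k0}" using assms by auto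
  moreover have "{1..m} \<inter> {k. 2*k = 2*k0-1} = {}" using assms by (auto; presburger)
  ultimately show ?thesis unfolding Ssum_split by simp
qed

lemma Ssum_0: assumes "m \<ge> 1" shows "Ssum m a b c 0 = a 1"
proof -
  have "{1..m} \<inter> {k. 2*k-2 = 0} = {1}" using assms by auto
  moreover have "{1..m} \<inter> {k. 2*k-1 = (0::nat)} = {}" using assms by auto
  moreover have "{1..m} \<inter> {k. 2*k = (0::nat)} = {}" using assms by auto
  ultimately show ?thesis unfolding Ssum_split by simp
qed

lemma Ssum_last: assumes "m \<ge> 1" shows "Ssum m a b c (2*m) = c m"
proof -
  have "{1..m} \<inter> {k. 2*k-2 = 2*m} = {}" using assms by auto
  moreover have "{1..m} \<inter> {k. 2*k-1 = 2*m} = {}" using assms by (auto; presburger)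
  moreover have "{1..m} \<inter> {k. 2*k = 2*m} = {m}" using assms by auto
  ultimately show ?thesis unfolding Ssum_split by simp
qed

lemma Ssum_mid: assumes "k0 \<in> {2..m}" shows "Ssum m a b c (2*k0-2) = a k0 + c (k0-1)"
proof -
  have "{1..m} \<inter> {k. 2*k-2 = 2*k0-2} = {k0}" using assms by auto
  moreover have "{1..m} \<inter> {k. 2*k-1 = 2*k0-2} = {}" using assms by (auto; presburger)
  moreover have "{1..m} \<inter> {k. 2*k = 2*k0-2} = {k0-1}" using assms by auto
  ultimately show ?thesis unfolding Ssum_split by simp
qed

lemma j_cases:
  fixes j m :: nat
  assumes "j < 2*m+1" "m \<ge> 1"
  obtains (odd) k0 where "k0 \<in> {1..m}" "j = 2*k0-1"
    | (zero) "j = 0"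
    | (last) "j = 2*m"
    | (mid) k0 where "k0 \<in> {2..m}" "j = 2*k0-2"
proof (cases "even j")
  case True
  then obtain h where h: "j = 2*h" by blast
  show ?thesis
  proof (cases "h = 0")
    case True thus ?thesis using zero h by simp
  next
    case False
    show ?thesis
    proof (cases "h = m")
      case True thus ?thesis using last h by simp
    next
      case False
      hence "h + 1 \<in> {2..m}" using \<open>h \<noteq> 0\<close> h assms by auto
      moreover have "j = 2*(h+1) - 2" using h by simp
      ultimately show ?thesis using mid by blast
    qed
  qed
next
  case False
  then obtain h where h: "j = 2*h+1" using oddE by blast
  hence "h + 1 \<in> {1..m}" using assms by auto
  moreover have "j = 2*(h+1) - 1" using h by simp
  ultimately show ?thesis using odd by blast
qed


definition DA :: "nat \<Rightarrow> (nat \<Rightarrow> 'd) \<Rightarrow> real^'d \<Rightarrow> real^'d \<Rightarrow> real" where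
  "DA n idx \<omega> h = (\<Sum>k\<in>{1..n-2}. da (tc idx \<omega> k) (xc idx \<omega> k) (tc idx \<omega> (k+1)) * tc idx h k
      + db (tc idx \<omega> k) (xc idx \<omega> k) (tc idx \<omega> (k+1)) * xc idx h k
      + dc (tc idx \<omega> k) (xc idx \<omega> k) (tc idx \<omega> (k+1)) * tc idx h (k+1))"

definition ee :: "(nat \<Rightarrow> 'd) \<Rightarrow> nat \<Rightarrow> real^'d" where
  "ee idx j = axis (idx j) 1"

lemma bl_tc: "bounded_linear (\<lambda>\<omega>. tc idx \<omega> k)" unfolding tc_def by (rule bounded_linear_vec_nth)
lemma bl_xc: "bounded_linear (\<lambda>\<omega>. xc idx \<omega> k)" unfolding xc_def by (rule bounded_linear_vec_nth)

lemma Omega_inV: "\<omega> \<in> Omega n idx \<Longrightarrow> k \<in> {1..n-2} \<Longrightarrow> inV (tc idx \<omega> k) (xc idx \<omega> k) (tc idx \<omega> (k+1))"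
  unfolding Omega_def by auto

lemma Omega_inV': "\<omega> \<in> Omega n idx \<Longrightarrow> 1 \<le> k \<Longrightarrow> k \<le> n-2 \<Longrightarrow> inV (tc idx \<omega> k) (xc idx \<omega> k) (tc idx \<omega> (Suc k))"
  using Omega_inV[of \<omega> n idx k] by simp

lemma area_deriv: assumes "\<omega> \<in> Omega n idx" shows "(area n idx has_derivative DA n idx \<omega>) (at \<omega>)"
proof -
  have e1: "area n idx = (\<lambda>v. \<Sum>k\<in>{1..n-2}. sqrt (heron (tc idx v k) (xc idx v k) (tc idx v (k+1))) / 4)"
    by (rule ext) (simp add: area_def)
  have e2: "DA n idx \<omega> = (\<lambda>h. \<Sum>k\<in>{1..n-2}. da (tc idx \<omega> k) (xc idx \<omega> k) (tc idx \<omega> (k+1)) * tc idx h k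
      + db (tc idx \<omega> k) (xc idx \<omega> k) (tc idx \<omega> (k+1)) * xc idx h k
      + dc (tc idx \<omega> k) (xc idx \<omega> k) (tc idx \<omega> (k+1)) * tc idx h (k+1))"
    by (rule ext) (simp add: DA_def)
  show ?thesis unfolding e1 e2
    by (rule has_derivative_sum, rule tri_deriv[OF bl_tc bl_xc bl_tc], rule heron_pos, rule Omega_inV[OF assms])
qed

lemma bl_perim: "bounded_linear (perim n idx)"
proof -
  have e: "perim n idx = (\<lambda>v. tc idx v 1 + (\<Sum>k\<in>{1..n-2}. xc idx v k) + tc idx v (n-1))"
    by (rule ext) (simp add: perim_def)
  show ?thesis unfolding e
    by (intro bounded_linear_add bounded_linear_sum bl_tc bl_xc)
qed

lemma perim_deriv: "(perim n idx has_derivative perim n idx) (at \<omega>)"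
  by (rule bounded_linear_imp_has_derivative[OF bl_perim])

lemma euler: assumes "heron t x s > 0"
  shows "da t x s * t + db t x s * x + dc t x s * s = sqrt (heron t x s) / 2"
proof -
  define r where "r = sqrt (heron t x s)"
  have rp: "r > 0" unfolding r_def using assms by simp
  have sq: "r * r = heron t x s" unfolding r_def using assms by simp
  have "da t x s * t + db t x s * x + dc t x s * s
      = (t^2 * (x^2 + s^2 - t^2) + x^2 * (t^2 + s^2 - x^2) + s^2 * (t^2 + x^2 - s^2)) / (2 * r)"
    unfolding da_def db_def dc_def r_def[symmetric] by (simp add: add_divide_distrib power2_eq_square mult_ac)
  also have "t^2 * (x^2 + s^2 - t^2) + x^2 * (t^2 + s^2 - x^2) + s^2 * (t^2 + x^2 - s^2) = r * r"
    unfolding sq heron_def by (simp add: power2_eq_square algebra_simps)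
  also have "r * r / (2 * r) = r / 2" using rp by simp
  finally show ?thesis unfolding r_def .
qed

lemma DA_self_pos: assumes "\<omega> \<in> Omega n idx" "n \<ge> 3" shows "DA n idx \<omega> \<omega> > 0"
proof -
  have "DA n idx \<omega> \<omega> = (\<Sum>k\<in>{1..n-2}. sqrt (heron (tc idx \<omega> k) (xc idx \<omega> k) (tc idx \<omega> (k+1))) / 2)"
    unfolding DA_def by (rule sum.cong[OF refl], rule euler, rule heron_pos, rule Omega_inV[OF assms(1)])
  also have "\<dots> > 0"
    by (rule sum_pos) (use assms(2) in \<open>auto intro!: heron_pos Omega_inV'[OF assms(1)]\<close>)
  finally show ?thesis .
qed

context
  fixes n :: nat and idx :: "nat \<Rightarrow> 'd::finite"
  assumes n: "n \<ge> 3" and bij: "bij_betw idx {..<2*n-3} (UNIV :: 'd set)"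
begin

lemma inj_idx: "inj_on idx {..<2*n-3}" using bij by (rule bij_betw_imp_inj_on)

lemma ee_nth: "i < 2*n-3 \<Longrightarrow> j < 2*n-3 \<Longrightarrow> ee idx j $ idx i = ind (i = j)"
  unfolding ee_def axis_def ind_def using inj_idx by (auto simp: inj_on_eq_iff)

lemma tc_ee: "k \<in> {1..n-1} \<Longrightarrow> j < 2*n-3 \<Longrightarrow> tc idx (ee idx j) k = ind (2*k-2 = j)"
  unfolding tc_def using n by (intro ee_nth) auto

lemma xc_ee: "k \<in> {1..n-2} \<Longrightarrow> j < 2*n-3 \<Longrightarrow> xc idx (ee idx j) k = ind (2*k-1 = j)"
  unfolding xc_def using n by (intro ee_nth) auto

lemma DA_ee: assumes "j < 2*n-3"
  shows "DA n idx \<omega> (ee idx j) = Ssum (n-2) (\<lambda>k. da (tc idx \<omega> k) (xc idx \<omega> k) (tc idx \<omega> (k+1)))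
     (\<lambda>k. db (tc idx \<omega> k) (xc idx \<omega> k) (tc idx \<omega> (k+1))) (\<lambda>k. dc (tc idx \<omega> k) (xc idx \<omega> k) (tc idx \<omega> (k+1))) j"
  unfolding DA_def Ssum_def
proof (rule sum.cong)
  fix k assume k: "k \<in> {1..n-2}"
  have "k \<in> {1..n-1}" "k+1 \<in> {1..n-1}" using k n by auto
  moreover have "2*(k+1)-2 = 2*k" by simp
  ultimately show "da (tc idx \<omega> k) (xc idx \<omega> k) (tc idx \<omega> (k + 1)) * tc idx (ee idx j) k +
         db (tc idx \<omega> k) (xc idx \<omega> k) (tc idx \<omega> (k + 1)) * xc idx (ee idx j) k +
         dc (tc idx \<omega> k) (xc idx \<omega> k) (tc idx \<omega> (k + 1)) * tc idx (ee idx j) (k + 1) =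
         da (tc idx \<omega> k) (xc idx \<omega> k) (tc idx \<omega> (k + 1)) * ind (2 * k - 2 = j) +
         db (tc idx \<omega> k) (xc idx \<omega> k) (tc idx \<omega> (k + 1)) * ind (2 * k - 1 = j) +
         dc (tc idx \<omega> k) (xc idx \<omega> k) (tc idx \<omega> (k + 1)) * ind (2 * k = j)"
    using tc_ee[of k j] tc_ee[of "k+1" j] xc_ee[OF k, of j] assms by simp
qed simp

lemma perim_ee: assumes "j < 2*n-3"
  shows "perim n idx (ee idx j) = ind (0 = j) + Ssum (n-2) (\<lambda>_. 0) (\<lambda>_. 1) (\<lambda>_. 0) j + ind (2*(n-2) = j)"
proof -
  have "tc idx (ee idx j) 1 = ind (0 = j)" using tc_ee[of 1 j] assms n by simp
  moreover have "tc idx (ee idx j) (n-1) = ind (2*(n-2) = j)"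
  proof -
    have "2*(n-1)-2 = 2*(n-2)" by simp
    thus ?thesis using tc_ee[of "n-1" j] assms n by simp
  qed
  moreover have "(\<Sum>k\<in>{1..n-2}. xc idx (ee idx j) k) = Ssum (n-2) (\<lambda>_. 0) (\<lambda>_. 1) (\<lambda>_. 0) j"
    unfolding Ssum_def by (rule sum.cong) (use xc_ee assms in auto)
  ultimately show ?thesis unfolding perim_def by simp
qed

lemma m_ge: "n - 2 \<ge> 1" using n by simp
lemma N_eq: "2*n-3 = 2*(n-2)+1" using n by simp

lemma Lag_iff: assumes om: "\<omega> \<in> Omega n idx"
  shows "(\<exists>l. \<forall>h. DA n idx \<omega> h = l * perim n idx h) \<longleftrightarrow> (\<exists>l. Lag (tc idx \<omega>) (xc idx \<omega>) (n-2) l)"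
proof -
  define m where "m = n - 2"
  have m: "m \<ge> 1" unfolding m_def using n by simp
  have N: "2*n-3 = 2*m+1" unfolding m_def using n by simp
  define a where "a k = da (tc idx \<omega> k) (xc idx \<omega> k) (tc idx \<omega> (k+1))" for k
  define b where "b k = db (tc idx \<omega> k) (xc idx \<omega> k) (tc idx \<omega> (k+1))" for k
  define c where "c k = dc (tc idx \<omega> k) (xc idx \<omega> k) (tc idx \<omega> (k+1))" for k
  have DAe: "DA n idx \<omega> (ee idx j) = Ssum m a b c j" if "j < 2*m+1" for j
    using DA_ee[of j \<omega>] that N unfolding a_def b_def c_def m_def by simp
  have Pe: "perim n idx (ee idx j) = ind (0 = j) + Ssum m (\<lambda>_. 0) (\<lambda>_. 1) (\<lambda>_. 0) j + ind (2*m = j)"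
    if "j < 2*m+1" for j
    using perim_ee[of j] that N unfolding m_def by simp
  have lt: "2*k0-1 < 2*m+1" "2*k0-2 < 2*m+1" if "k0 \<in> {1..m}" for k0 using that by auto
  have P0: "perim n idx (ee idx 0) = 1" using Pe[of 0] Ssum_0[OF m] m by (simp add: ind_def)
  have Pl: "perim n idx (ee idx (2*m)) = 1" using Pe[of "2*m"] Ssum_last[OF m] m by (simp add: ind_def)
  have Po: "perim n idx (ee idx (2*k0-1)) = 1" if "k0 \<in> {1..m}" for k0
  proof -
    have "2*m \<noteq> 2*k0-1" "0 \<noteq> 2*k0-1" using that by (auto; presburger)+
    thus ?thesis using Pe[OF lt(1)[OF that]] Ssum_odd[OF that] unfolding ind_def by simp
  qed
  have Pm: "perim n idx (ee idx (2*k0-2)) = 0" if "k0 \<in> {2..m}" for k0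
  proof -
    have "2*m \<noteq> 2*k0-2" "0 \<noteq> 2*k0-2" using that by auto
    thus ?thesis using Pe[of "2*k0-2"] Ssum_mid[OF that] that unfolding ind_def by simp
  qed
  show ?thesis
  proof
    assume "\<exists>l. \<forall>h. DA n idx \<omega> h = l * perim n idx h"
    then obtain l where l: "\<And>h. DA n idx \<omega> h = l * perim n idx h" by blast
    have "a 1 = l" using l[of "ee idx 0"] DAe[of 0] Ssum_0[OF m] P0 by simp
    moreover have "c m = l" using l[of "ee idx (2*m)"] DAe[of "2*m"] Ssum_last[OF m] Pl by simp
    moreover have "b k = l" if "k \<in> {1..m}" for k
      using l[of "ee idx (2*k-1)"] DAe[OF lt(1)[OF that]] Ssum_odd[OF that] Po[OF that] by simp
    moreover have "c (k-1) + a k = 0" if "k \<in> {2..m}" for k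
    proof -
      have "k \<in> {1..m}" using that by simp
      thus ?thesis using l[of "ee idx (2*k-2)"] DAe[OF lt(2)] Ssum_mid[OF that] Pm[OF that] by simp
    qed
    ultimately have "Lag (tc idx \<omega>) (xc idx \<omega>) m l"
      unfolding Lag_def a_def b_def c_def by (auto simp: numeral_2_eq_2)
    thus "\<exists>l. Lag (tc idx \<omega>) (xc idx \<omega>) (n-2) l" unfolding m_def by blast
  next
    assume "\<exists>l. Lag (tc idx \<omega>) (xc idx \<omega>) (n-2) l"
    then obtain l where L: "Lag (tc idx \<omega>) (xc idx \<omega>) m l" unfolding m_def by blast
    have La: "a 1 = l" and Lc: "c m = l" and Lb: "\<And>k. k \<in> {1..m} \<Longrightarrow> b k = l"
      and Li: "\<And>k. k \<in> {2..m} \<Longrightarrow> c (k-1) + a k = 0"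
      using L unfolding Lag_def a_def b_def c_def by (auto simp: numeral_2_eq_2)
    have "DA n idx \<omega> = (\<lambda>h. l * perim n idx h)"
    proof (rule linear_eq_stdbasis)
      show "linear (DA n idx \<omega>)" using has_derivative_bounded_linear[OF area_deriv[OF om]]
        by (rule bounded_linear.linear)
      show "linear (\<lambda>h. l * perim n idx h)"
        by (rule bounded_linear.linear, rule bounded_linear_const_mult, rule bl_perim)
      fix v :: "real^'d" assume "v \<in> Basis"
      then obtain i where i: "v = axis i 1" using axis_inverse by blast
      have "i \<in> idx ` {..<2*n-3}" using bij unfolding bij_betw_def by auto
      then obtain j where j: "j < 2*m+1" "v = ee idx j" using i N unfolding ee_def by auto
      have "DA n idx \<omega> (ee idx j) = l * perim n idx (ee idx j)"
        using j(1) m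
      proof (cases rule: j_cases)
        case (odd k0) thus ?thesis using DAe[OF j(1)] Ssum_odd[OF odd(1)] Po[OF odd(1)] Lb[OF odd(1)] by simp
      next
        case zero thus ?thesis using DAe[OF j(1)] Ssum_0[OF m] P0 La by simp
      next
        case last thus ?thesis using DAe[OF j(1)] Ssum_last[OF m] Pl Lc by simp
      next
        case (mid k0) thus ?thesis using DAe[OF j(1)] Ssum_mid[OF mid(1)] Pm[OF mid(1)] Li[OF mid(1)] by simp
      qed
      thus "DA n idx \<omega> v = l * perim n idx v" using j(2) by simp
    qed
    thus "\<exists>l. \<forall>h. DA n idx \<omega> h = l * perim n idx h" by metis
  qed
qed

end


lemma cont_heron[continuous_intros]:
  "continuous_on S f1 \<Longrightarrow> continuous_on S f2 \<Longrightarrow> continuous_on S f3 \<Longrightarrow>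
   continuous_on S (\<lambda>w. heron (f1 w) (f2 w) (f3 w))"
  unfolding heron_def by (intro continuous_intros)

lemma cont_d:
  assumes "continuous_on S f1" "continuous_on S f2" "continuous_on S f3"
    and "\<And>w. w \<in> S \<Longrightarrow> heron (f1 w) (f2 w) (f3 w) > 0"
  shows "continuous_on S (\<lambda>w. da (f1 w) (f2 w) (f3 w))"
    "continuous_on S (\<lambda>w. db (f1 w) (f2 w) (f3 w))"
    "continuous_on S (\<lambda>w. dc (f1 w) (f2 w) (f3 w))"
  unfolding da_def db_def dc_def by (intro continuous_intros assms; use assms in force)+

lemma cont_tc: "continuous_on S (\<lambda>\<omega>. tc idx \<omega> k)" unfolding tc_def by (intro continuous_intros)
lemma cont_xc: "continuous_on S (\<lambda>\<omega>. xc idx \<omega> k)" unfolding xc_def by (intro continuous_intros)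

lemma open_inV: "open {\<omega>. inV (tc idx \<omega> k) (xc idx \<omega> k) (tc idx \<omega> (k+1))}"
  unfolding inV_def tc_def xc_def by (intro open_Collect_conj open_Collect_less continuous_intros)

lemma open_Omega: "open (Omega n idx)"
proof -
  define U where "U = {\<omega>. (\<forall>i. 0 < \<omega> $ i) \<and> (\<forall>k\<in>{1..n-2}. inV (tc idx \<omega> k) (xc idx \<omega> k) (tc idx \<omega> (k+1)))}"
  define S where "S \<omega> = (\<Sum>k=1..n-2. alpha (tc idx \<omega> k) (xc idx \<omega> k) (tc idx \<omega> (k+1)))" for \<omega>
  have eq: "Omega n idx = U \<inter> S -` {..<2*pi}" unfolding Omega_def U_def S_def by auto
  have Ueq: "U = (\<Inter>i\<in>UNIV. {\<omega>. 0 < \<omega> $ i}) \<inter> (\<Inter>k\<in>{1..n-2}. {\<omega>. inV (tc idx \<omega> k) (xc idx \<omega> k) (tc idx \<omega> (k+1))})"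
    unfolding U_def by auto
  have oU: "open U" unfolding Ueq
    by (intro open_Int open_INT ballI finite_class.finite_UNIV finite_atLeastAtMost open_inV open_halfspace_component_gt_cart)
  have cU: "continuous_on U S"
    unfolding S_def
  proof (intro continuous_on_sum)
    fix k assume k: "k \<in> {1..n-2}"
    have V: "\<And>w. w \<in> U \<Longrightarrow> inV (tc idx w k) (xc idx w k) (tc idx w (k+1))" using k unfolding U_def by auto
    show "continuous_on U (\<lambda>w. alpha (tc idx w k) (xc idx w k) (tc idx w (k+1)))"
      unfolding alpha_def
    proof (rule continuous_on_arccos)
      show "continuous_on U (\<lambda>w. ((tc idx w k)\<^sup>2 + (tc idx w (k + 1))\<^sup>2 - (xc idx w k)\<^sup>2) / (2 * tc idx w k * tc idx w (k + 1)))"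
        by (intro continuous_intros cont_tc cont_xc) (use V in \<open>force simp: inV_def\<close>)
      show "\<forall>w\<in>U. - 1 \<le> ((tc idx w k)\<^sup>2 + (tc idx w (k + 1))\<^sup>2 - (xc idx w k)\<^sup>2) / (2 * tc idx w k * tc idx w (k + 1))
          \<and> ((tc idx w k)\<^sup>2 + (tc idx w (k + 1))\<^sup>2 - (xc idx w k)\<^sup>2) / (2 * tc idx w k * tc idx w (k + 1)) \<le> 1"
        using Cc_bounds[OF V] unfolding Cc_def by (auto intro: less_imp_le)
    qed
  qed
  show ?thesis unfolding eq by (rule continuous_open_preimage[OF cU oU open_lessThan])
qed


theorem theorem3p2:
  fixes n :: nat and idx :: "nat \<Rightarrow> 'd::finite"
  assumes "n \<ge> 3"
    and "bij_betw idx {..<2*n-3} (UNIV :: 'd set)"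
  shows "open (Omega n idx)
    \<and> submersion_on (perim n idx) (Omega n idx)
    \<and> submersion_on (area n idx) (Omega n idx)
    \<and> (\<forall>\<omega>\<in>Omega n idx. \<exists>D. (Psi n idx has_derivative D) (at \<omega>)
          \<and> dim (range D) = (if regular n idx \<omega> then 1 else 2))
    \<and> open {\<omega>\<in>Omega n idx. \<not> regular n idx \<omega>}"
proof -
  have n: "n \<ge> 3" using assms(1) .
  have m: "n - 2 \<ge> 1" using n by simp
  have P0: "perim n idx (ee idx 0) = 1"
    using perim_ee[OF assms, of 0] Ssum_0[OF m] n by (simp add: ind_def)
  have linP: "linear (perim n idx)" using bl_perim bounded_linear.linear by blast
  have linA: "linear (DA n idx \<omega>)" if "\<omega> \<in> Omega n idx" for \<omega>
    using has_derivative_bounded_linear[OF area_deriv[OF that]] by (rule bounded_linear.linear)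
  have oO: "open (Omega n idx)" by (rule open_Omega)
  have sp: "submersion_on (perim n idx) (Omega n idx)"
    unfolding submersion_on_def
  proof
    fix \<omega> assume "\<omega> \<in> Omega n idx"
    have "surj (perim n idx)"
    proof (rule surjI)
      fix y show "perim n idx (y *\<^sub>R ee idx 0) = y" using linear_scale[OF linP] P0 by simp
    qed
    thus "\<exists>D. (perim n idx has_derivative D) (at \<omega>) \<and> surj D" using perim_deriv by blast
  qed
  have sa: "submersion_on (area n idx) (Omega n idx)"
    unfolding submersion_on_def
  proof
    fix \<omega> assume om: "\<omega> \<in> Omega n idx"
    have pos: "DA n idx \<omega> \<omega> > 0" by (rule DA_self_pos[OF om n])
    have "surj (DA n idx \<omega>)"
    proof (rule surjI)
      fix y show "DA n idx \<omega> ((y / DA n idx \<omega> \<omega>) *\<^sub>R \<omega>) = y"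
        using linear_scale[OF linA[OF om]] pos by simp
    qed
    thus "\<exists>D. (area n idx has_derivative D) (at \<omega>) \<and> surj D" using area_deriv[OF om] by blast
  qed
  have rk: "\<forall>\<omega>\<in>Omega n idx. \<exists>D. (Psi n idx has_derivative D) (at \<omega>)
          \<and> dim (range D) = (if regular n idx \<omega> then 1 else 2)"
  proof
    fix \<omega> assume om: "\<omega> \<in> Omega n idx"
    have e: "Psi n idx = (\<lambda>w. (perim n idx w, area n idx w))" by (rule ext) (simp add: Psi_def)
    have d: "(Psi n idx has_derivative (\<lambda>h. (perim n idx h, DA n idx \<omega> h))) (at \<omega>)"
      unfolding e by (rule has_derivative_Pair[OF perim_deriv area_deriv[OF om]])
    have r: "regular n idx \<omega> \<longleftrightarrow> (\<exists>l. \<forall>h. DA n idx \<omega> h = l * perim n idx h)"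
      using regular_iff_Lag[OF n om] Lag_iff[OF assms om] by simp
    show "\<exists>D. (Psi n idx has_derivative D) (at \<omega>) \<and> dim (range D) = (if regular n idx \<omega> then 1 else 2)"
      using d rank2[OF linP linA[OF om] P0] r by auto
  qed
  have hp: "\<And>k w. w \<in> Omega n idx \<Longrightarrow> k \<in> {1..n-2} \<Longrightarrow> heron (tc idx w k) (xc idx w k) (tc idx w (k+1)) > 0"
    by (rule heron_pos, rule Omega_inV)
  define a1 where "a1 w = da (tc idx w 1) (xc idx w 1) (tc idx w (1+1))" for w
  define g0 where "g0 w = dc (tc idx w (n-2)) (xc idx w (n-2)) (tc idx w (n-2+1)) - a1 w" for w
  define g1 where "g1 k w = db (tc idx w k) (xc idx w k) (tc idx w (k+1)) - a1 w" for k w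
  define g2 where "g2 k w = dc (tc idx w (k-1)) (xc idx w (k-1)) (tc idx w (k-1+1)) + da (tc idx w k) (xc idx w k) (tc idx w (k+1))" for k w
  have key: "regular n idx w \<longleftrightarrow> (g0 w = 0 \<and> (\<forall>k\<in>{1..n-2}. g1 k w = 0) \<and> (\<forall>k\<in>{2..n-2}. g2 k w = 0))"
    if om: "w \<in> Omega n idx" for w
  proof -
    have "regular n idx w \<longleftrightarrow> Lag (tc idx w) (xc idx w) (n-2) (a1 w)"
      using regular_iff_Lag[OF n om] unfolding Lag_def a1_def by (auto simp: numeral_2_eq_2)
    also have "\<dots> \<longleftrightarrow> (g0 w = 0 \<and> (\<forall>k\<in>{1..n-2}. g1 k w = 0) \<and> (\<forall>k\<in>{2..n-2}. g2 k w = 0))"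
    proof -
      have "\<And>k. k \<in> {2..n-2} \<Longrightarrow> k - 1 + 1 = k" by auto
      thus ?thesis unfolding Lag_def g0_def g1_def g2_def a1_def by (auto simp: numeral_2_eq_2)
    qed
    finally show ?thesis .
  qed
  have seteq: "{\<omega>\<in>Omega n idx. \<not> regular n idx \<omega>} = (Omega n idx \<inter> g0 -` (-{0}))
      \<union> (\<Union>k\<in>{1..n-2}. Omega n idx \<inter> g1 k -` (-{0})) \<union> (\<Union>k\<in>{2..n-2}. Omega n idx \<inter> g2 k -` (-{0}))"
    using key by auto
  have ca1: "continuous_on (Omega n idx) a1"
    unfolding a1_def by (rule cont_d(1)[OF cont_tc cont_xc cont_tc hp]) (use m in auto)
  have oc: "open (-{0::real})" by (simp add: open_Compl)
  have o0: "open (Omega n idx \<inter> g0 -` (-{0}))"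
  proof (rule continuous_open_preimage[OF _ oO oc])
    show "continuous_on (Omega n idx) g0" unfolding g0_def
      by (intro continuous_on_diff ca1 cont_d(3)[OF cont_tc cont_xc cont_tc hp]) (use m in auto)
  qed
  have o1: "open (Omega n idx \<inter> g1 k -` (-{0}))" if k: "k \<in> {1..n-2}" for k
  proof (rule continuous_open_preimage[OF _ oO oc])
    show "continuous_on (Omega n idx) (g1 k)" unfolding g1_def
      by (intro continuous_on_diff ca1 cont_d(2)[OF cont_tc cont_xc cont_tc hp]) (use k in auto)
  qed
  have o2: "open (Omega n idx \<inter> g2 k -` (-{0}))" if k: "k \<in> {2..n-2}" for k
  proof (rule continuous_open_preimage[OF _ oO oc])
    have k1: "k - 1 \<in> {1..n-2}" "k \<in> {1..n-2}" using k by auto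
    show "continuous_on (Omega n idx) (g2 k)" unfolding g2_def
      by (intro continuous_on_add cont_d(3)[OF cont_tc cont_xc cont_tc hp] cont_d(1)[OF cont_tc cont_xc cont_tc hp])
        (use k1 in auto)
  qed
  have "open {\<omega>\<in>Omega n idx. \<not> regular n idx \<omega>}"
    unfolding seteq by (intro open_Un open_UN ballI o0 o1 o2)
  thus ?thesis using oO sp sa rk by blast
qed


end
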